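(* Let $q\ge 2$ be an integer, $M\in\mathbb{Z}$, $N\in\mathbb{N}$, and let $a_{M+1},\dots,a_{M+N}$ be complex numbers. Then \[ \frac{q}{\varphi(q)}\sum_{\xi\in G_1(q)}\Bigl|\sum_{n=M+1}^{M+N}a_n\,\xi(n)\Bigr|^2 = q\mathop{\sum_{n=M+1}^{M+N}\ \sum_{n'=M+1}^{M+N}}_{\substack{\gcd(nn',q)=1\\ n\equiv n' \ (\mathrm{mod}\ q)}}\overline{a_n}\,a_{n'}\;e\!\left(\frac{\overline{n}}{q}\cdot\frac{n'-n}{q}\right), \] where $\overline{n}$ denotes any integer with $n\overline{n}\equiv 1 \pmod q$ (note $(n'-n)/q$ is an integer in each term). Moreover $G_1(q)$ consists of exactly $\varphi(q)$ characters, namely $\xi_0\chi$ where $\xi_0$ is any fixed element of $G_1(q)$ and $\chi$ runs over the Dirichlet characters modulo $q$ (viewed as characters modulo $q^2$).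
   Context: $e(x)=\exp(2\pi i x)$ and $\varphi$ is Euler's function. For a positive integer $q$, $G_1(q)$ denotes the set of Dirichlet characters $\xi$ modulo $q^2$ such that $\xi(x)=e\!\left(\frac{x-1}{q^2}\right)$ for every integer $x\equiv 1\pmod q$. Dirichlet characters modulo $q^2$ vanish on integers not coprime to $q$. *)

theory Defs
  imports "HOL-Analysis.Analysis" "HOL-Number_Theory.Number_Theory"
begin

definition e :: "real \<Rightarrow> complex" where
  "e x = exp (2 * pi * \<i> * complex_of_real x)"

definition dirichlet_char :: "int \<Rightarrow> (int \<Rightarrow> complex) \<Rightarrow> bool" where
  "dirichlet_char m chi \<longleftrightarrow> m \<ge> 1 \<and>
     (\<forall>n. chi (n + m) = chi n) \<and>
     (\<forall>a b. chi (a * b) = chi a * chi b) \<and>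
     chi 1 = 1 \<and>
     (\<forall>n. chi n = 0 \<longleftrightarrow> \<not> coprime n m)"

definition G1 :: "int \<Rightarrow> (int \<Rightarrow> complex) set" where
  "G1 q = {\<xi>. dirichlet_char (q^2) \<xi> \<and>
     (\<forall>x. [x = 1] (mod q) \<longrightarrow> \<xi> x = e (real_of_int (x - 1) / real_of_int (q^2)))}"

end

theory Submission
  imports Defs
begin

lemma e_add: "e (x + y) = e x * e y"
  unfolding e_def by (simp add: distrib_left exp_add)

lemma e_int: "e (real_of_int k) = 1"
proof -
  have "e (real_of_int k) = exp ((2 * of_int k * pi) * \<i>)"
    unfolding e_def by (simp add: mult_ac)
  also have "\<dots> = 1" by (rule exp_integer_2pi) simp
  finally show ?thesis .
qed

lemma e_0: "e 0 = 1" using e_int[of 0] by simp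

lemma e_add_int: "e (x + real_of_int k) = e x"
  by (simp add: e_add e_int)

lemma norm_e: "norm (e x) = 1"
  unfolding e_def by simp

lemma e_nonzero: "e x \<noteq> 0"
  unfolding e_def by simp

lemma e_pow: "e x ^ k = e (real k * x)"
  unfolding e_def by (simp add: exp_of_nat_mult[symmetric] mult_ac)

lemma e_inv_ne1:
  assumes "k \<ge> (2::nat)"
  shows "e (1 / real k) \<noteq> 1"
proof
  assume "e (1 / real k) = 1"
  then obtain n :: int where n: "2 * pi / real k = of_int (2 * n) * pi"
    unfolding e_def exp_eq_1 by auto
  hence "2 * (pi * (1 / real k)) = 2 * (pi * of_int n)" by (simp add: field_simps)
  hence "pi * (1 / real k) = pi * of_int n" by (simp only: mult_left_cancel)
  hence "1 / real k = of_int n" using pi_neq_zero by (metis mult_left_cancel)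
  moreover have "0 < 1 / real k" "1 / real k < 1" using assms by auto
  ultimately have "0 < real_of_int n" "real_of_int n < 1" by simp_all
  hence "0 < n" "n < 1" by simp_all
  thus False by simp
qed

lemma root_exists: "k > 0 \<Longrightarrow> \<exists>c::complex. c ^ k = z"
proof (cases "z = 0")
  case True
  assume "k > 0" then show ?thesis using True by (intro exI[of _ 0]) simp
next
  case False
  assume k: "k > 0"
  have "exp (Ln z / of_nat k) ^ k = exp (of_nat k * (Ln z / of_nat k))"
    by (rule exp_of_nat_mult[symmetric])
  also have "\<dots> = z" using k False by simp
  finally show ?thesis by blast
qed


lemma euler_int:
  fixes x m :: int
  assumes "m > 1" "coprime x m"
  shows "[x ^ totient (nat m) = 1] (mod m)"
proof -
  interpret residues m "residue_ring m" using assms(1) by (simp add: residues_def)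
  show ?thesis using euler_theorem assms(2) by blast
qed

lemma totient_pos_int: "(m::int) > 1 \<Longrightarrow> totient (nat m) > 0"
  by simp

lemma inverse_mod:
  fixes x m :: int
  assumes "m > 1" "coprime x m"
  shows "[x * x ^ (totient (nat m) - 1) = 1] (mod m)"
proof -
  have "x * x ^ (totient (nat m) - 1) = x ^ totient (nat m)"
    using totient_pos_int[OF assms(1)] by (metis Suc_diff_1 power_Suc)
  thus ?thesis using euler_int[OF assms] by simp
qed

lemma dc_periodic_nat:
  assumes "dirichlet_char m chi"
  shows "chi (n + int k * m) = chi n"
proof (induction k)
  case 0 then show ?case by simp
next
  case (Suc k)
  have "chi (n + int (Suc k) * m) = chi ((n + int k * m) + m)" by (simp add: algebra_simps)
  also have "\<dots> = chi (n + int k * m)" using assms unfolding dirichlet_char_def by blast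
  finally show ?case using Suc by simp
qed

lemma dc_mod:
  assumes "dirichlet_char m chi"
  shows "chi (n mod m) = chi n"
proof -
  have "m > 0" using assms unfolding dirichlet_char_def by simp
  have d: "n div m \<ge> 0 \<or> n div m < 0" by auto
  show ?thesis
  proof (cases "n div m \<ge> 0")
    case True
    have e1: "n mod m + int (nat (n div m)) * m = n" using True mod_div_mult_eq[of n m] by simp
    have "chi (n mod m) = chi (n mod m + int (nat (n div m)) * m)" by (rule dc_periodic_nat[OF assms, symmetric])
    also have "\<dots> = chi n" by (simp only: e1)
    finally show ?thesis .
  next
    case False
    have k: "int (nat (- (n div m))) = - (n div m)" using False by simp
    have "n + int (nat (- (n div m))) * m = n mod m"
      unfolding k using mod_div_mult_eq[of n m] by (simp only: mult_minus_left)
    hence "chi (n mod m) = chi (n + int (nat (- (n div m))) * m)" by simp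
    also have "\<dots> = chi n" by (rule dc_periodic_nat[OF assms])
    finally show ?thesis .
  qed
qed

lemma dc_cong:
  assumes "dirichlet_char m chi" "[a = b] (mod m)"
  shows "chi a = chi b"
  using dc_mod[OF assms(1), of a] dc_mod[OF assms(1), of b] assms(2) unfolding cong_def by simp

lemma dc_mult: "dirichlet_char m chi \<Longrightarrow> chi (a * b) = chi a * chi b"
  unfolding dirichlet_char_def by blast

lemma dc_one: "dirichlet_char m chi \<Longrightarrow> chi 1 = 1"
  unfolding dirichlet_char_def by blast

lemma dc_zero_iff: "dirichlet_char m chi \<Longrightarrow> chi n = 0 \<longleftrightarrow> \<not> coprime n m"
  unfolding dirichlet_char_def by blast

lemma dc_pow: "dirichlet_char m chi \<Longrightarrow> chi (a ^ k) = chi a ^ k"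
  by (induction k) (auto simp: dc_mult dc_one)

lemma dc_root:
  assumes "dirichlet_char m chi" "m > 1" "coprime x m"
  shows "chi x ^ totient (nat m) = 1"
  using dc_pow[OF assms(1), of x] dc_cong[OF assms(1) euler_int[OF assms(2,3)]] dc_one[OF assms(1)]
  by simp

lemma dc_norm:
  assumes "dirichlet_char m chi" "m > 1" "coprime x m"
  shows "norm (chi x) = 1"
  using power_eq_1_iff[OF dc_root[OF assms]] totient_pos_int[OF assms(2)] by auto

lemma dc_cnj_mult:
  assumes "dirichlet_char m chi" "m > 1" "coprime x m"
  shows "cnj (chi x) * chi x = 1"
  using dc_norm[OF assms] complex_norm_square[of "chi x"] by (simp add: mult.commute)

lemma dc_inv:
  assumes "dirichlet_char m chi" "m > 1" "coprime x m" "[x * y = 1] (mod m)"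
  shows "cnj (chi x) = chi y"
proof -
  have "chi x * chi y = 1" using dc_cong[OF assms(1,4)] dc_mult[OF assms(1)] dc_one[OF assms(1)] by simp
  hence "cnj (chi x) * (chi x * chi y) = cnj (chi x)" by simp
  moreover have "cnj (chi x) * (chi x * chi y) = (cnj (chi x) * chi x) * chi y"
    by (rule mult.assoc[symmetric])
  ultimately show ?thesis using dc_cnj_mult[OF assms(1-3)] by (metis mult_1_left)
qed


definition subgrp :: "int \<Rightarrow> int set \<Rightarrow> bool" where
  "subgrp m H \<longleftrightarrow> 1 \<in> H \<and> (\<forall>x\<in>H. \<forall>y\<in>H. x * y \<in> H) \<and> (\<forall>x\<in>H. coprime x m) \<and>
     (\<forall>x y. x \<in> H \<longrightarrow> [x = y] (mod m) \<longrightarrow> y \<in> H)"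

definition pchar :: "int \<Rightarrow> int set \<Rightarrow> (int \<Rightarrow> complex) \<Rightarrow> bool" where
  "pchar m H psi \<longleftrightarrow> psi 1 = 1 \<and> (\<forall>x\<in>H. \<forall>y\<in>H. psi (x * y) = psi x * psi y) \<and>
     (\<forall>x\<in>H. \<forall>y. [x = y] (mod m) \<longrightarrow> psi y = psi x)"

lemma sg_one: "subgrp m H \<Longrightarrow> 1 \<in> H" unfolding subgrp_def by blast
lemma sg_mult: "subgrp m H \<Longrightarrow> x \<in> H \<Longrightarrow> y \<in> H \<Longrightarrow> x * y \<in> H" unfolding subgrp_def by blast
lemma sg_coprime: "subgrp m H \<Longrightarrow> x \<in> H \<Longrightarrow> coprime x m" unfolding subgrp_def by blast
lemma sg_cong: "subgrp m H \<Longrightarrow> x \<in> H \<Longrightarrow> [x = y] (mod m) \<Longrightarrow> y \<in> H" unfolding subgrp_def by blast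

lemma sg_pow: "subgrp m H \<Longrightarrow> x \<in> H \<Longrightarrow> x ^ n \<in> H"
  by (induction n) (auto intro: sg_one sg_mult)

lemma pc_one: "pchar m H psi \<Longrightarrow> psi 1 = 1" unfolding pchar_def by blast
lemma pc_mult: "pchar m H psi \<Longrightarrow> x \<in> H \<Longrightarrow> y \<in> H \<Longrightarrow> psi (x * y) = psi x * psi y"
  unfolding pchar_def by blast
lemma pc_cong: "pchar m H psi \<Longrightarrow> x \<in> H \<Longrightarrow> [x = y] (mod m) \<Longrightarrow> psi y = psi x"
  unfolding pchar_def by blast

lemma pc_pow:
  assumes "subgrp m H" "pchar m H psi" "x \<in> H"
  shows "psi (x ^ n) = psi x ^ n"
proof (induction n)
  case 0 then show ?case using pc_one[OF assms(2)] by simp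
next
  case (Suc n)
  have "psi (x ^ Suc n) = psi (x * x ^ n)" by simp
  also have "\<dots> = psi x * psi (x ^ n)" by (rule pc_mult[OF assms(2,3) sg_pow[OF assms(1,3)]])
  finally show ?case using Suc by simp
qed

lemma ext_step:
  fixes m g :: int and c :: complex and k :: nat
  assumes m: "m > 1" and sg: "subgrp m H" and pc: "pchar m H psi" and g: "coprime g m"
    and k: "k > 0" "g ^ k \<in> H" and kmin: "\<forall>r. 0 < r \<and> r < k \<longrightarrow> g ^ r \<notin> H"
    and c: "c ^ k = psi (g ^ k)"
  shows "\<exists>H' psi'. subgrp m H' \<and> pchar m H' psi' \<and> H \<subseteq> H' \<and> g \<in> H' \<and>
            (\<forall>x\<in>H. psi' x = psi x) \<and> psi' g = c"
proof -
  define T where "T = totient (nat m)"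
  have invH: "h ^ (T - 1) \<in> H" if "h \<in> H" for h using sg_pow[OF sg that] .
  have invc: "[h * h ^ (T - 1) = 1] (mod m)" if "h \<in> H" for h
    unfolding T_def by (rule inverse_mod[OF m sg_coprime[OF sg that]])
  have dvd: "k dvd j" if "g ^ j \<in> H" for j
  proof -
    define t r where "t = j div k" and "r = j mod k"
    have j: "j = k * t + r" unfolding t_def r_def by simp
    have r: "r < k" unfolding r_def using k by simp
    define A where "A = (g ^ k) ^ t"
    have A: "A \<in> H" unfolding A_def by (rule sg_pow[OF sg k(2)])
    have gj: "g ^ j = A * g ^ r" unfolding A_def j by (simp add: power_add power_mult)
    have "[g ^ j * A ^ (T - 1) = g ^ r * (A * A ^ (T - 1))] (mod m)"
      unfolding gj by (simp add: mult_ac)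
    also have "[g ^ r * (A * A ^ (T - 1)) = g ^ r * 1] (mod m)"
      by (rule cong_scalar_left[OF invc[OF A]])
    finally have "[g ^ j * A ^ (T - 1) = g ^ r] (mod m)" by simp
    moreover have "g ^ j * A ^ (T - 1) \<in> H" by (rule sg_mult[OF sg that invH[OF A]])
    ultimately have "g ^ r \<in> H" using sg_cong[OF sg] by blast
    hence "r = 0" using kmin r by auto
    thus ?thesis using j by simp
  qed
  have wd: "c ^ j * psi h = c ^ j' * psi h'"
    if h: "h \<in> H" "h' \<in> H" and cg: "[g ^ j * h = g ^ j' * h'] (mod m)" and le: "j' \<le> j" for j j' h h'
  proof -
    define d where "d = j - j'"
    have jd: "j = j' + d" unfolding d_def using le by simp
    have cop: "coprime (g ^ j') m" using g by simp
    have "[g ^ j' * (g ^ d * h) = g ^ j' * h'] (mod m)" using cg unfolding jd by (simp add: power_add mult_ac)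
    hence c1: "[g ^ d * h = h'] (mod m)" using cong_mult_lcancel[OF cop] by blast
    have "[g ^ d * (h * h ^ (T - 1)) = g ^ d * 1] (mod m)" by (rule cong_scalar_left[OF invc[OF h(1)]])
    hence "[(g ^ d * h) * h ^ (T - 1) = g ^ d] (mod m)" by (simp add: mult.assoc)
    hence "[g ^ d = (g ^ d * h) * h ^ (T - 1)] (mod m)" by (rule cong_sym)
    also have "[(g ^ d * h) * h ^ (T - 1) = h' * h ^ (T - 1)] (mod m)" by (rule cong_scalar_right[OF c1])
    finally have "[h' * h ^ (T - 1) = g ^ d] (mod m)" by (rule cong_sym)
    moreover have "h' * h ^ (T - 1) \<in> H" by (rule sg_mult[OF sg h(2) invH[OF h(1)]])
    ultimately have gd: "g ^ d \<in> H" using sg_cong[OF sg] by blast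
    then obtain t where t: "d = k * t" using dvd by blast
    have gdh: "g ^ d * h \<in> H" by (rule sg_mult[OF sg gd h(1)])
    have "psi h' = psi (g ^ d * h)" by (rule pc_cong[OF pc gdh c1])
    also have "\<dots> = psi (g ^ d) * psi h" by (rule pc_mult[OF pc gd h(1)])
    also have "psi (g ^ d) = psi ((g ^ k) ^ t)" unfolding t by (simp add: power_mult)
    also have "\<dots> = psi (g ^ k) ^ t" by (rule pc_pow[OF sg pc k(2)])
    also have "\<dots> = c ^ d" unfolding t c[symmetric] by (simp add: power_mult)
    finally have "psi h' = c ^ d * psi h" .
    thus ?thesis unfolding jd by (simp add: power_add mult_ac)
  qed
  have wd2: "c ^ j * psi h = c ^ j' * psi h'"
    if h: "h \<in> H" "h' \<in> H" and cg: "[g ^ j * h = g ^ j' * h'] (mod m)" for j j' h h'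
  proof (cases "j' \<le> j")
    case True then show ?thesis using wd[OF h cg] by blast
  next
    case False
    have "[g ^ j' * h' = g ^ j * h] (mod m)" using cg by (rule cong_sym)
    then show ?thesis using wd[OF h(2,1)] False by fastforce
  qed
  define H' where "H' = {x. \<exists>j h. h \<in> H \<and> [x = g ^ j * h] (mod m)}"
  define P where "P = (\<lambda>x p. snd p \<in> H \<and> [x = g ^ (fst p) * snd p] (mod m))"
  define psi' where "psi' = (\<lambda>x. let p = (SOME p. P x p) in c ^ (fst p) * psi (snd p))"
  have val: "psi' x = c ^ j * psi h" if h: "h \<in> H" "[x = g ^ j * h] (mod m)" for x j h
  proof -
    have "P x (j, h)" unfolding P_def using h by simp
    hence Pp: "P x (SOME p. P x p)" by (rule someI)
    define p where "p = (SOME p. P x p)"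
    have jh: "snd p \<in> H" "[x = g ^ fst p * snd p] (mod m)" using Pp unfolding P_def p_def by auto
    have "[g ^ fst p * snd p = g ^ j * h] (mod m)" by (rule cong_trans[OF cong_sym[OF jh(2)] h(2)])
    hence "c ^ fst p * psi (snd p) = c ^ j * psi h" by (rule wd2[OF jh(1) h(1)])
    thus ?thesis unfolding psi'_def p_def[symmetric] Let_def .
  qed
  have inH': "x \<in> H'" if "h \<in> H" "[x = g ^ j * h] (mod m)" for x j h
    unfolding H'_def using that by blast
  have H'E: "\<exists>j h. h \<in> H \<and> [x = g ^ j * h] (mod m)" if "x \<in> H'" for x
    using that unfolding H'_def by blast
  have sub: "H \<subseteq> H'"
  proof
    fix x assume "x \<in> H" thus "x \<in> H'" by (intro inH'[of x _ 0]) auto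
  qed
  have onH: "psi' x = psi x" if "x \<in> H" for x
    using val[OF that, of x 0] by simp
  have gH': "g \<in> H'" by (rule inH'[OF sg_one[OF sg], of g 1]) simp
  have psig: "psi' g = c" using val[OF sg_one[OF sg], of g 1] pc_one[OF pc] by simp
  have prod: "x * y \<in> H' \<and> psi' (x * y) = psi' x * psi' y" if xy: "x \<in> H'" "y \<in> H'" for x y
  proof -
    obtain j h where jh: "h \<in> H" "[x = g ^ j * h] (mod m)" using H'E[OF xy(1)] by blast
    obtain j' h' where jh': "h' \<in> H" "[y = g ^ j' * h'] (mod m)" using H'E[OF xy(2)] by blast
    have hh: "h * h' \<in> H" by (rule sg_mult[OF sg jh(1) jh'(1)])
    have "[x * y = (g ^ j * h) * (g ^ j' * h')] (mod m)" by (rule cong_mult[OF jh(2) jh'(2)])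
    hence cg: "[x * y = g ^ (j + j') * (h * h')] (mod m)" by (simp add: power_add mult_ac)
    have "psi' (x * y) = c ^ (j + j') * psi (h * h')" by (rule val[OF hh cg])
    also have "\<dots> = (c ^ j * psi h) * (c ^ j' * psi h')"
      using pc_mult[OF pc jh(1) jh'(1)] by (simp add: power_add mult_ac)
    also have "\<dots> = psi' x * psi' y" using val[OF jh] val[OF jh'] by simp
    finally show ?thesis using inH'[OF hh cg] by blast
  qed
  have sg': "subgrp m H'"
    unfolding subgrp_def
  proof (intro conjI ballI allI impI)
    show "1 \<in> H'" using sub sg_one[OF sg] by blast
  next
    fix x y assume "x \<in> H'" "y \<in> H'" thus "x * y \<in> H'" using prod by blast
  next
    fix x assume "x \<in> H'"
    then obtain j h where jh: "h \<in> H" "[x = g ^ j * h] (mod m)" using H'E by blast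
    have "coprime (g ^ j * h) m" using g sg_coprime[OF sg jh(1)] by simp
    thus "coprime x m" using jh(2) cong_imp_coprime cong_sym by blast
  next
    fix x y assume "x \<in> H'" "[x = y] (mod m)"
    then obtain j h where jh: "h \<in> H" "[x = g ^ j * h] (mod m)" using H'E by blast
    have "[y = g ^ j * h] (mod m)" by (rule cong_trans[OF cong_sym[OF \<open>[x = y] (mod m)\<close>] jh(2)])
    thus "y \<in> H'" using inH'[OF jh(1)] by blast
  qed
  have pc': "pchar m H' psi'"
    unfolding pchar_def
  proof (intro conjI ballI allI impI)
    show "psi' 1 = 1" using onH[OF sg_one[OF sg]] pc_one[OF pc] by simp
  next
    fix x y assume "x \<in> H'" "y \<in> H'" thus "psi' (x * y) = psi' x * psi' y" using prod by blast
  next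
    fix x y assume "x \<in> H'" "[x = y] (mod m)"
    then obtain j h where jh: "h \<in> H" "[x = g ^ j * h] (mod m)" using H'E by blast
    have "[y = g ^ j * h] (mod m)" by (rule cong_trans[OF cong_sym[OF \<open>[x = y] (mod m)\<close>] jh(2)])
    thus "psi' y = psi' x" using val[OF jh(1)] jh(2) by simp
  qed
  show ?thesis using sg' pc' sub gH' onH psig by blast
qed


lemma pc_nonzero:
  assumes m: "m > 1" and sg: "subgrp m H" and pc: "pchar m H psi" and x: "x \<in> H"
  shows "psi x \<noteq> 0"
proof -
  define T where "T = totient (nat m)"
  have xi: "x ^ (T - 1) \<in> H" by (rule sg_pow[OF sg x])
  have "[1 = x * x ^ (T - 1)] (mod m)" unfolding T_def
    by (rule cong_sym[OF inverse_mod[OF m sg_coprime[OF sg x]]])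
  hence "psi (x * x ^ (T - 1)) = psi 1" by (rule pc_cong[OF pc sg_one[OF sg]])
  hence "psi x * psi (x ^ (T - 1)) = 1" using pc_mult[OF pc x xi] pc_one[OF pc] by simp
  thus ?thesis by auto
qed

lemma least_exp:
  fixes m g :: int
  assumes m: "m > 1" and sg: "subgrp m H" and g: "coprime g m"
  shows "\<exists>k>0. g ^ k \<in> H \<and> (\<forall>r. 0 < r \<and> r < k \<longrightarrow> g ^ r \<notin> H)"
proof -
  define T where "T = totient (nat m)"
  have T: "T > 0" unfolding T_def using m by simp
  have "[1 = g ^ T] (mod m)" unfolding T_def by (rule cong_sym[OF euler_int[OF m g]])
  hence gT: "g ^ T \<in> H" by (rule sg_cong[OF sg sg_one[OF sg]])
  define k where "k = (LEAST k. 0 < k \<and> g ^ k \<in> H)"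
  have "0 < k \<and> g ^ k \<in> H" unfolding k_def by (rule LeastI[of _ T]) (use T gT in simp)
  moreover have "\<forall>r. 0 < r \<and> r < k \<longrightarrow> g ^ r \<notin> H"
    unfolding k_def using not_less_Least by blast
  ultimately show ?thesis by blast
qed

lemma ext_full:
  assumes m: "m > 1"
  shows "subgrp m H \<Longrightarrow> pchar m H psi \<Longrightarrow> \<exists>chi. dirichlet_char m chi \<and> (\<forall>x\<in>H. chi x = psi x)"
proof (induction "card ({0..<m} - H)" arbitrary: H psi rule: less_induct)
  case less
  note sg = less.prems(1) and pc = less.prems(2)
  show ?case
  proof (cases "\<forall>g. coprime g m \<longrightarrow> g \<in> H")
    case True
    define chi where "chi = (\<lambda>n. if coprime n m then psi n else 0)"
    have dc: "dirichlet_char m chi"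
      unfolding dirichlet_char_def
    proof (intro conjI allI)
      show "1 \<le> m" using m by simp
    next
      fix n
      have cg: "[n = n + m] (mod m)" by (simp add: cong_def)
      have cp: "coprime (n + m) m \<longleftrightarrow> coprime n m"
        using cong_imp_coprime[OF cg] cong_imp_coprime[OF cong_sym[OF cg]] by blast
      show "chi (n + m) = chi n"
      proof (cases "coprime n m")
        case True
        then have "n \<in> H" using \<open>\<forall>g. coprime g m \<longrightarrow> g \<in> H\<close> by blast
        then show ?thesis unfolding chi_def using cp True pc_cong[OF pc _ cg] by simp
      next
        case False then show ?thesis unfolding chi_def using cp by simp
      qed
    next
      fix a b
      show "chi (a * b) = chi a * chi b"
      proof (cases "coprime a m \<and> coprime b m")
        case True
        then have "a \<in> H" "b \<in> H" using \<open>\<forall>g. coprime g m \<longrightarrow> g \<in> H\<close> by blast+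
        then show ?thesis unfolding chi_def using True pc_mult[OF pc] by simp
      next
        case False then show ?thesis unfolding chi_def by auto
      qed
    next
      show "chi 1 = 1" unfolding chi_def using pc_one[OF pc] by simp
    next
      fix n
      show "chi n = 0 \<longleftrightarrow> \<not> coprime n m"
        unfolding chi_def using pc_nonzero[OF m sg pc] \<open>\<forall>g. coprime g m \<longrightarrow> g \<in> H\<close> by auto
    qed
    moreover have "\<forall>x\<in>H. chi x = psi x" unfolding chi_def using sg_coprime[OF sg] by auto
    ultimately show ?thesis by blast
  next
    case False
    then obtain g where g: "coprime g m" "g \<notin> H" by blast
    obtain k where k: "k > 0" "g ^ k \<in> H" "\<forall>r. 0 < r \<and> r < k \<longrightarrow> g ^ r \<notin> H"
      using least_exp[OF m sg g(1)] by blast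
    obtain c where c: "c ^ k = psi (g ^ k)" using root_exists[OF k(1)] by blast
    obtain H' psi' where H': "subgrp m H'" "pchar m H' psi'" "H \<subseteq> H'" "g \<in> H'"
        "\<forall>x\<in>H. psi' x = psi x"
      using ext_step[OF m sg pc g(1) k c] by blast
    have cgm: "[g mod m = g] (mod m)" by (simp add: cong_def)
    have gm1: "g mod m \<notin> H" using sg_cong[OF sg _ cgm] g(2) by blast
    have gm2: "g mod m \<in> H'" using sg_cong[OF H'(1) H'(4) cong_sym[OF cgm]] .
    have gm3: "g mod m \<in> {0..<m}" using m by simp
    have "{0..<m} - H' \<subset> {0..<m} - H" using H'(3) gm1 gm2 gm3 by blast
    hence "card ({0..<m} - H') < card ({0..<m} - H)" by (rule psubset_card_mono[rotated]) simp
    then obtain chi where chi: "dirichlet_char m chi" "\<forall>x\<in>H'. chi x = psi' x"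
      using less.hyps[OF _ H'(1,2)] by blast
    have "\<forall>x\<in>H. chi x = psi x"
    proof
      fix x assume x: "x \<in> H"
      have "x \<in> H'" using H'(3) x by blast
      then have "chi x = psi' x" using chi(2) by blast
      also have "psi' x = psi x" using H'(5) x by blast
      finally show "chi x = psi x" .
    qed
    thus ?thesis using chi(1) by blast
  qed
qed

lemma exists_sep:
  fixes m x :: int
  assumes m: "m > 1" and x: "coprime x m" "\<not> [x = 1] (mod m)"
  shows "\<exists>chi. dirichlet_char m chi \<and> chi x \<noteq> 1"
proof -
  define H where "H = {y. [y = 1] (mod m)}"
  have sg: "subgrp m H" unfolding subgrp_def H_def
  proof (intro conjI ballI allI impI)
    fix y z assume "y \<in> {y. [y = 1] (mod m)}" "z \<in> {y. [y = 1] (mod m)}"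
    then show "y * z \<in> {y. [y = 1] (mod m)}" using cong_mult by fastforce
  next
    fix y assume "y \<in> {y. [y = 1] (mod m)}"
    then show "coprime y m" using cong_imp_coprime[of 1 y m] cong_sym by auto
  next
    fix y z assume "y \<in> {y. [y = 1] (mod m)}" "[y = z] (mod m)"
    then show "z \<in> {y. [y = 1] (mod m)}" using cong_trans cong_sym by blast
  qed auto
  have pc: "pchar m H (\<lambda>_. 1)" unfolding pchar_def by simp
  have xH: "x \<notin> H" unfolding H_def using x(2) by simp
  obtain k where k: "k > 0" "x ^ k \<in> H" "\<forall>r. 0 < r \<and> r < k \<longrightarrow> x ^ r \<notin> H"
    using least_exp[OF m sg x(1)] by blast
  have k2: "k \<ge> 2" using k xH by (cases k; cases "k = 1"; auto)
  have c: "e (1 / real k) ^ k = (\<lambda>_. 1) (x ^ k)"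
    using k(1) by (simp add: e_pow e_int[of 1, simplified])
  obtain H' psi' where H': "subgrp m H'" "pchar m H' psi'" "x \<in> H'" "psi' x = e (1 / real k)"
    using ext_step[OF m sg pc x(1) k c] by blast
  obtain chi where "dirichlet_char m chi" "\<forall>y\<in>H'. chi y = psi' y"
    using ext_full[OF m H'(1,2)] by blast
  thus ?thesis using H'(3,4) e_inv_ne1[OF k2] by auto
qed


definition chi0 :: "int \<Rightarrow> int \<Rightarrow> complex" where
  "chi0 m = (\<lambda>n. if coprime n m then 1 else 0)"

definition resid :: "int \<Rightarrow> int set" where
  "resid m = {x \<in> {0..<m}. coprime x m}"

lemma chi0_dc: "m \<ge> 1 \<Longrightarrow> dirichlet_char m (chi0 m)"
proof -
  assume m: "m \<ge> 1"
  have cp: "coprime (n + m) m \<longleftrightarrow> coprime n m" for n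
  proof -
    have cg: "[n = n + m] (mod m)" by (simp add: cong_def)
    show ?thesis using cong_imp_coprime[OF cg] cong_imp_coprime[OF cong_sym[OF cg]] by blast
  qed
  show ?thesis unfolding dirichlet_char_def chi0_def using m cp by auto
qed

lemma dc_prod: "dirichlet_char m a \<Longrightarrow> dirichlet_char m b \<Longrightarrow> dirichlet_char m (\<lambda>n. a n * b n)"
  unfolding dirichlet_char_def by (auto simp: mult_ac)

lemma dc_cnj: "dirichlet_char m a \<Longrightarrow> dirichlet_char m (\<lambda>n. cnj (a n))"
  unfolding dirichlet_char_def by auto

lemma dc_ext:
  assumes "dirichlet_char m a" "dirichlet_char m b" "\<And>n. coprime n m \<Longrightarrow> a n = b n"
  shows "a = b"
proof
  fix n show "a n = b n"
    using assms dc_zero_iff[OF assms(1), of n] dc_zero_iff[OF assms(2), of n] by (cases "coprime n m") auto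
qed

lemma finite_dc:
  assumes m: "m > 1"
  shows "finite {chi. dirichlet_char m chi}"
proof -
  define T where "T = totient (nat m)"
  define S where "S = insert (0::complex) {z. z ^ T = 1}"
  have T: "T > 0" unfolding T_def using m by simp
  have fS: "finite S" unfolding S_def using finite_roots_unity[of T] T by simp
  have inj: "inj_on (\<lambda>chi. restrict chi {0..<m}) {chi. dirichlet_char m chi}"
  proof (rule inj_onI)
    fix a b assume a: "a \<in> {chi. dirichlet_char m chi}" and b: "b \<in> {chi. dirichlet_char m chi}"
      and eq: "restrict a {0..<m} = restrict b {0..<m}"
    show "a = b"
    proof
      fix n
      have "n mod m \<in> {0..<m}" using m by simp
      hence "a (n mod m) = b (n mod m)" using eq by (metis restrict_apply')
      thus "a n = b n" using dc_mod[of m a n] dc_mod[of m b n] a b by simp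
    qed
  qed
  have sub: "(\<lambda>chi. restrict chi {0..<m}) ` {chi. dirichlet_char m chi} \<subseteq> PiE {0..<m} (\<lambda>_. S)"
  proof
    fix f assume "f \<in> (\<lambda>chi. restrict chi {0..<m}) ` {chi. dirichlet_char m chi}"
    then obtain chi where chi: "dirichlet_char m chi" "f = restrict chi {0..<m}" by blast
    have "chi n \<in> S" for n
    proof (cases "coprime n m")
      case True then show ?thesis using dc_root[OF chi(1) m True] unfolding S_def T_def by simp
    next
      case False then show ?thesis using dc_zero_iff[OF chi(1)] unfolding S_def by simp
    qed
    thus "f \<in> PiE {0..<m} (\<lambda>_. S)" unfolding chi(2) by auto
  qed
  have "finite (PiE {0..<m} (\<lambda>_. S))" by (rule finite_PiE) (use fS in auto)
  hence "finite ((\<lambda>chi. restrict chi {0..<m}) ` {chi. dirichlet_char m chi})" using sub finite_subset by blast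
  thus ?thesis using finite_imageD[OF _ inj] by blast
qed

lemma sum_chars:
  assumes m: "m > 1" and x: "coprime x m"
  shows "(\<Sum>chi\<in>{chi. dirichlet_char m chi}. chi x) =
           (if [x = 1] (mod m) then of_nat (card {chi. dirichlet_char m chi}) else 0)"
proof (cases "[x = 1] (mod m)")
  case True
  have "(\<Sum>chi\<in>{chi. dirichlet_char m chi}. chi x) = (\<Sum>chi\<in>{chi. dirichlet_char m chi}. 1)"
    by (rule sum.cong) (auto simp: dc_cong[OF _ True] dc_one)
  thus ?thesis using True by simp
next
  case False
  define X where "X = {chi. dirichlet_char m chi}"
  obtain c1 where c1: "dirichlet_char m c1" "c1 x \<noteq> 1" using exists_sep[OF m x False] by blast
  define f where "f = (\<lambda>chi n. c1 n * chi n)"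
  have bij: "bij_betw f X X"
  proof (rule bij_betwI[where g = "\<lambda>chi n. cnj (c1 n) * chi n"])
    show "f \<in> X \<rightarrow> X" unfolding f_def X_def using dc_prod[OF c1(1)] by auto
    show "(\<lambda>chi n. cnj (c1 n) * chi n) \<in> X \<rightarrow> X" unfolding X_def using dc_prod[OF dc_cnj[OF c1(1)]] by auto
  next
    fix chi assume chi: "chi \<in> X"
    have dc1: "dirichlet_char m (\<lambda>n. cnj (c1 n) * (c1 n * chi n))"
      using dc_prod[OF dc_cnj[OF c1(1)] dc_prod[OF c1(1), of chi]] chi unfolding X_def by simp
    show "(\<lambda>n. cnj (c1 n) * f chi n) = chi" unfolding f_def
      by (rule dc_ext[OF dc1]) (use chi dc_cnj_mult[OF c1(1) m] in \<open>auto simp: X_def mult.assoc[symmetric]\<close>)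
    have dc2: "dirichlet_char m (\<lambda>n. c1 n * (cnj (c1 n) * chi n))"
      using dc_prod[OF c1(1) dc_prod[OF dc_cnj[OF c1(1)], of chi]] chi unfolding X_def by simp
    show "f (\<lambda>n. cnj (c1 n) * chi n) = chi" unfolding f_def
    proof (rule dc_ext[OF dc2])
      show "dirichlet_char m chi" using chi unfolding X_def by simp
      fix n assume "coprime n m"
      hence "cnj (c1 n) * c1 n = 1" by (rule dc_cnj_mult[OF c1(1) m])
      thus "c1 n * (cnj (c1 n) * chi n) = chi n" by (metis mult.assoc mult.commute mult_1_left)
    qed
  qed
  have "(\<Sum>chi\<in>X. chi x) = (\<Sum>chi\<in>X. f chi x)" by (rule sum.reindex_bij_betw[OF bij, symmetric])
  also have "\<dots> = c1 x * (\<Sum>chi\<in>X. chi x)" unfolding f_def by (simp add: sum_distrib_left)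
  finally have "(1 - c1 x) * (\<Sum>chi\<in>X. chi x) = 0" by (simp add: algebra_simps)
  hence "(\<Sum>chi\<in>X. chi x) = 0" using c1(2) by simp
  thus ?thesis using False unfolding X_def by simp
qed


lemma finite_resid: "finite (resid m)"
  by (rule finite_subset[of _ "{0..<m}"]) (auto simp: resid_def)

lemma one_resid: "m > 1 \<Longrightarrow> 1 \<in> resid m" unfolding resid_def by simp

lemma sum_resid:
  assumes m: "m > 1" and chi: "dirichlet_char m chi"
  shows "(\<Sum>x\<in>resid m. chi x) = (if chi = chi0 m then of_nat (card (resid m)) else 0)"
proof (cases "chi = chi0 m")
  case True
  have "(\<Sum>x\<in>resid m. chi x) = (\<Sum>x\<in>resid m. 1)"
    by (rule sum.cong) (auto simp: True chi0_def resid_def)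
  thus ?thesis using True by simp
next
  case False
  have "\<exists>y. coprime y m \<and> chi y \<noteq> 1"
  proof (rule ccontr)
    assume "\<not> ?thesis"
    hence "chi = chi0 m" using dc_ext[OF chi chi0_dc] m unfolding chi0_def by auto
    thus False using False by simp
  qed
  then obtain y where y: "coprime y m" "chi y \<noteq> 1" by blast
  define h where "h = (\<lambda>x. (y * x) mod m)"
  have img: "h ` resid m \<subseteq> resid m"
  proof
    fix z assume "z \<in> h ` resid m"
    then obtain x where x: "x \<in> resid m" "z = (y * x) mod m" unfolding h_def by blast
    have "coprime (y * x) m" using y(1) x(1) unfolding resid_def by simp
    hence "coprime z m" unfolding x(2) using cong_imp_coprime[of "y * x" "(y * x) mod m" m] by (simp add: cong_def)
    thus "z \<in> resid m" unfolding resid_def x(2) using m by simp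
  qed
  have inj: "inj_on h (resid m)"
  proof (rule inj_onI)
    fix a b assume a: "a \<in> resid m" and b: "b \<in> resid m" and eq: "h a = h b"
    hence "[y * a = y * b] (mod m)" unfolding h_def cong_def by simp
    hence "[a = b] (mod m)" using cong_mult_lcancel[OF y(1)] by blast
    thus "a = b" using a b unfolding resid_def cong_def by simp
  qed
  have bij: "bij_betw h (resid m) (resid m)"
    unfolding bij_betw_def using inj endo_inj_surj[OF finite_resid img inj] by blast
  have "(\<Sum>x\<in>resid m. chi x) = (\<Sum>x\<in>resid m. chi (h x))" by (rule sum.reindex_bij_betw[OF bij, symmetric])
  also have "\<dots> = (\<Sum>x\<in>resid m. chi y * chi x)"
    unfolding h_def by (rule sum.cong) (auto simp: dc_mod[OF chi] dc_mult[OF chi])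
  also have "\<dots> = chi y * (\<Sum>x\<in>resid m. chi x)" by (simp add: sum_distrib_left)
  finally have "(1 - chi y) * (\<Sum>x\<in>resid m. chi x) = 0" by (simp add: algebra_simps)
  hence "(\<Sum>x\<in>resid m. chi x) = 0" using y(2) by simp
  thus ?thesis using False by simp
qed

lemma card_resid:
  assumes m: "m > 1"
  shows "card (resid m) = totient (nat m)"
proof -
  have "resid m = int ` totatives (nat m)"
  proof (intro equalityI subsetI)
    fix x assume x: "x \<in> resid m"
    hence x0: "x \<ge> 0" "x < m" "coprime x m" unfolding resid_def by auto
    have "x \<noteq> 0" using x0(3) m by auto
    hence "nat x \<in> totatives (nat m)" using x0 unfolding totatives_def
      by (auto simp: coprime_int_iff[symmetric])
    thus "x \<in> int ` totatives (nat m)" using x0 by (metis image_eqI int_nat_eq)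
  next
    fix x assume "x \<in> int ` totatives (nat m)"
    then obtain k where k: "k \<in> totatives (nat m)" "x = int k" by blast
    have "k < nat m" using totatives_less[OF k(1)] m by simp
    moreover have "coprime k (nat m)" using k(1) unfolding totatives_def by simp
    hence "coprime (int k) (int (nat m))" by (simp only: coprime_int_iff)
    hence "coprime (int k) m" using m by simp
    ultimately show "x \<in> resid m" unfolding resid_def k(2) using m by simp
  qed
  thus ?thesis unfolding totient_def by (simp add: card_image)
qed

lemma card_dc:
  assumes m: "m > 1"
  shows "card {chi. dirichlet_char m chi} = totient (nat m)"
proof -
  define X where "X = {chi. dirichlet_char m chi}"
  have fX: "finite X" unfolding X_def by (rule finite_dc[OF m])
  have c0: "chi0 m \<in> X" unfolding X_def using chi0_dc m by simp
  have "(\<Sum>x\<in>resid m. \<Sum>chi\<in>X. chi x) = (\<Sum>x\<in>resid m. if x = 1 then of_nat (card X) else 0)"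
  proof (rule sum.cong)
    fix x assume x: "x \<in> resid m"
    have "[x = 1] (mod m) \<longleftrightarrow> x = 1" using x m unfolding resid_def cong_def by auto
    thus "(\<Sum>chi\<in>X. chi x) = (if x = 1 then of_nat (card X) else 0)"
      using sum_chars[OF m, of x] x unfolding X_def resid_def by simp
  qed simp
  also have "\<dots> = of_nat (card X)" using one_resid[OF m] finite_resid by simp
  finally have 1: "(\<Sum>x\<in>resid m. \<Sum>chi\<in>X. chi x) = of_nat (card X)" .
  have "(\<Sum>chi\<in>X. \<Sum>x\<in>resid m. chi x) = (\<Sum>chi\<in>X. if chi = chi0 m then of_nat (card (resid m)) else 0)"
    by (rule sum.cong) (auto simp: X_def sum_resid[OF m])
  also have "\<dots> = of_nat (card (resid m))" using c0 fX by simp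
  finally have 2: "(\<Sum>chi\<in>X. \<Sum>x\<in>resid m. chi x) = of_nat (card (resid m))" .
  have "(\<Sum>x\<in>resid m. \<Sum>chi\<in>X. chi x) = (\<Sum>chi\<in>X. \<Sum>x\<in>resid m. chi x)" by (rule sum.swap)
  hence "(of_nat (card X) :: complex) = of_nat (card (resid m))"
    using 1 2 by simp
  hence "card X = card (resid m)" by (simp only: of_nat_eq_iff)
  thus ?thesis unfolding X_def using card_resid[OF m] by simp
qed


lemma div_helper: "(Q::real) \<noteq> 0 \<Longrightarrow> A = B + C + Q * t \<Longrightarrow> A / Q = (B / Q + C / Q) + t"
  by (simp add: add_divide_distrib)

lemma div_helper2: "(Q::real) \<noteq> 0 \<Longrightarrow> A = B + Q * t \<Longrightarrow> A / Q = B / Q + t"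
  by (simp add: add_divide_distrib)

lemma e_ratio_mult:
  fixes q x y :: int
  assumes q: "q \<noteq> 0" and x: "[x = 1] (mod q)" and y: "[y = 1] (mod q)"
  shows "e (real_of_int (x * y - 1) / real_of_int (q^2)) =
         e (real_of_int (x - 1) / real_of_int (q^2)) * e (real_of_int (y - 1) / real_of_int (q^2))"
proof -
  obtain a where a: "x - 1 = q * a" using x unfolding cong_iff_dvd_diff by blast
  obtain b where b: "y - 1 = q * b" using y unfolding cong_iff_dvd_diff by blast
  have "x * y - 1 = (x - 1) + (y - 1) + q^2 * (a * b)"
    using a b by (simp add: algebra_simps power2_eq_square)
  hence "real_of_int (x * y - 1) = real_of_int (x - 1) + real_of_int (y - 1) + real_of_int (q^2) * real_of_int (a * b)"
    by (metis of_int_add of_int_mult)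
  hence "real_of_int (x * y - 1) / real_of_int (q^2) =
         (real_of_int (x - 1) / real_of_int (q^2) + real_of_int (y - 1) / real_of_int (q^2)) + real_of_int (a * b)"
    using q by (intro div_helper) simp_all
  thus ?thesis by (simp only: e_add_int e_add e_int mult_1_right)
qed

lemma e_ratio_cong:
  fixes q x y :: int
  assumes q: "q \<noteq> 0" and xy: "[x = y] (mod q^2)"
  shows "e (real_of_int (y - 1) / real_of_int (q^2)) = e (real_of_int (x - 1) / real_of_int (q^2))"
proof -
  obtain t where t: "y - x = q^2 * t" using cong_sym[OF xy] unfolding cong_iff_dvd_diff by blast
  have "y - 1 = (x - 1) + q^2 * t" using t by simp
  hence "real_of_int (y - 1) = real_of_int (x - 1) + real_of_int (q^2) * real_of_int t"
    by (metis of_int_add of_int_mult)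
  hence "real_of_int (y - 1) / real_of_int (q^2) = real_of_int (x - 1) / real_of_int (q^2) + real_of_int t"
    using q by (intro div_helper2) simp_all
  thus ?thesis by (simp only: e_add_int)
qed

lemma G1_exists:
  fixes q :: int
  assumes q: "q \<ge> 2"
  shows "\<exists>xi. xi \<in> G1 q"
proof -
  have m: "q^2 > 1" using q by (smt (verit) one_less_power pos2)
  have q0: "q \<noteq> 0" using q by simp
  define H where "H = {x. [x = 1] (mod q)}"
  define psi where "psi = (\<lambda>x. e (real_of_int (x - 1) / real_of_int (q^2)))"
  have sg: "subgrp (q^2) H" unfolding subgrp_def H_def
  proof (intro conjI ballI allI impI)
    fix y z assume "y \<in> {y. [y = 1] (mod q)}" "z \<in> {y. [y = 1] (mod q)}"
    then show "y * z \<in> {y. [y = 1] (mod q)}" using cong_mult by fastforce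
  next
    fix y assume "y \<in> {y. [y = 1] (mod q)}"
    then have "coprime y q" using cong_imp_coprime[of 1 y q] cong_sym by auto
    then show "coprime y (q^2)" by simp
  next
    fix y z assume "y \<in> {y. [y = 1] (mod q)}" "[y = z] (mod q^2)"
    then have "[y = z] (mod q)" using cong_dvd_modulus[of y z "q^2" q] by simp
    then show "z \<in> {y. [y = 1] (mod q)}" using \<open>y \<in> _\<close> cong_trans cong_sym by blast
  qed auto
  have pc: "pchar (q^2) H psi" unfolding pchar_def
  proof (intro conjI ballI allI impI)
    show "psi 1 = 1" unfolding psi_def by (simp add: e_0)
  next
    fix x y assume "x \<in> H" "y \<in> H"
    thus "psi (x * y) = psi x * psi y" unfolding psi_def H_def using e_ratio_mult[OF q0] by simp
  next
    fix x y assume "x \<in> H" "[x = y] (mod q^2)"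
    thus "psi y = psi x" unfolding psi_def using e_ratio_cong[OF q0] by simp
  qed
  obtain chi where chi: "dirichlet_char (q^2) chi" "\<forall>x\<in>H. chi x = psi x"
    using ext_full[OF m sg pc] by blast
  have "chi \<in> G1 q" unfolding G1_def using chi unfolding H_def psi_def by auto
  thus ?thesis by blast
qed

lemma G1_dc: "xi \<in> G1 q \<Longrightarrow> dirichlet_char (q^2) xi"
  unfolding G1_def by blast

lemma G1_val: "xi \<in> G1 q \<Longrightarrow> [x = 1] (mod q) \<Longrightarrow> xi x = e (real_of_int (x - 1) / real_of_int (q^2))"
  unfolding G1_def by blast

lemma G1_ratio:
  fixes q a b :: int
  assumes q: "q \<ge> 2" and xi: "xi \<in> G1 q" and xi': "xi' \<in> G1 q" and a: "coprime a q" and ab: "[a = b] (mod q)"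
  shows "xi b * cnj (xi' b) = xi a * cnj (xi' a)"
proof -
  have m: "q^2 > 1" using q by (smt (verit) one_less_power pos2)
  define T where "T = totient (nat (q^2))"
  define a' where "a' = a ^ (T - 1)"
  have a2: "coprime a (q^2)" using a by simp
  have aa: "[a * a' = 1] (mod q^2)" unfolding a'_def T_def by (rule inverse_mod[OF m a2])
  define u where "u = b * a'"
  have "[u = a * a'] (mod q)" unfolding u_def by (rule cong_scalar_right[OF cong_sym[OF ab]])
  moreover have "[a * a' = 1] (mod q)" using cong_dvd_modulus[OF aa, of q] by simp
  ultimately have u1: "[u = 1] (mod q)" by (rule cong_trans)
  have "[a * u = b * (a * a')] (mod q^2)" unfolding u_def by (simp add: mult_ac)
  also have "[b * (a * a') = b * 1] (mod q^2)" by (rule cong_scalar_left[OF aa])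
  finally have bu: "[b = a * u] (mod q^2)" by (simp add: cong_sym_eq)
  define E where "E = e (real_of_int (u - 1) / real_of_int (q^2))"
  have "xi b = xi a * E"
    using dc_cong[OF G1_dc[OF xi] bu] dc_mult[OF G1_dc[OF xi]] G1_val[OF xi u1] unfolding E_def by simp
  moreover have "xi' b = xi' a * E"
    using dc_cong[OF G1_dc[OF xi'] bu] dc_mult[OF G1_dc[OF xi']] G1_val[OF xi' u1] unfolding E_def by simp
  moreover have "E * cnj E = 1" unfolding E_def using complex_norm_square[of "e _"] norm_e by (metis norm_e of_real_1 power_one)
  ultimately show ?thesis by (simp add: mult_ac)
qed


lemma G1_eq:
  fixes q :: int
  assumes q: "q \<ge> 2" and xi0: "xi0 \<in> G1 q"
  shows "G1 q = (\<lambda>chi n. xi0 n * chi n) ` {chi. dirichlet_char q chi}"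
proof (intro equalityI subsetI)
  have m: "q^2 > 1" using q by (smt (verit) one_less_power pos2)
  have dc0: "dirichlet_char (q^2) xi0" by (rule G1_dc[OF xi0])
  fix xi assume xi: "xi \<in> G1 q"
  have dcx: "dirichlet_char (q^2) xi" by (rule G1_dc[OF xi])
  define chi where "chi = (\<lambda>n. if coprime n q then xi n * cnj (xi0 n) else 0)"
  have cp: "coprime (n + q) q \<longleftrightarrow> coprime n q" for n
  proof -
    have cg: "[n = n + q] (mod q)" by (simp add: cong_def)
    show ?thesis using cong_imp_coprime[OF cg] cong_imp_coprime[OF cong_sym[OF cg]] by blast
  qed
  have dc: "dirichlet_char q chi"
    unfolding dirichlet_char_def
  proof (intro conjI allI)
    show "1 \<le> q" using q by simp
  next
    fix n
    show "chi (n + q) = chi n"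
    proof (cases "coprime n q")
      case True
      have "[n = n + q] (mod q)" by (simp add: cong_def)
      note r = G1_ratio[OF q xi xi0 True this]
      have "coprime (n + q) q" using cp True by blast
      then show ?thesis unfolding chi_def using True r by simp
    next
      case False then show ?thesis unfolding chi_def using cp by simp
    qed
  next
    fix a b
    show "chi (a * b) = chi a * chi b"
      unfolding chi_def using dc_mult[OF dcx, of a b] dc_mult[OF dc0, of a b] by (auto simp: mult_ac)
  next
    show "chi 1 = 1" unfolding chi_def using dc_one[OF dcx] dc_one[OF dc0] by simp
  next
    fix n
    show "chi n = 0 \<longleftrightarrow> \<not> coprime n q"
      unfolding chi_def using dc_zero_iff[OF dcx, of n] dc_zero_iff[OF dc0, of n] by auto
  qed
  have "xi = (\<lambda>n. xi0 n * chi n)"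
  proof
    fix n show "xi n = xi0 n * chi n"
    proof (cases "coprime n q")
      case True
      hence "cnj (xi0 n) * xi0 n = 1" using dc_cnj_mult[OF dc0 m] by simp
      thus ?thesis unfolding chi_def using True by (simp add: mult_ac)
    next
      case False then show ?thesis unfolding chi_def using dc_zero_iff[OF dcx, of n] by simp
    qed
  qed
  thus "xi \<in> (\<lambda>chi n. xi0 n * chi n) ` {chi. dirichlet_char q chi}" using dc by blast
next
  fix xi assume "xi \<in> (\<lambda>chi n. xi0 n * chi n) ` {chi. dirichlet_char q chi}"
  then obtain chi where chi: "dirichlet_char q chi" "xi = (\<lambda>n. xi0 n * chi n)" by blast
  have dc0: "dirichlet_char (q^2) xi0" by (rule G1_dc[OF xi0])
  have dcq: "dirichlet_char (q^2) chi" unfolding dirichlet_char_def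
  proof (intro conjI allI)
    show "1 \<le> q^2" using q by (smt (verit) one_le_power)
  next
    fix n
    have "[n + q^2 = n] (mod q)" by (simp add: cong_def power2_eq_square)
    thus "chi (n + q^2) = chi n" by (rule dc_cong[OF chi(1)])
  next
    fix a b show "chi (a * b) = chi a * chi b" by (rule dc_mult[OF chi(1)])
  next
    show "chi 1 = 1" by (rule dc_one[OF chi(1)])
  next
    fix n show "chi n = 0 \<longleftrightarrow> \<not> coprime n (q^2)" using dc_zero_iff[OF chi(1)] by simp
  qed
  have "dirichlet_char (q^2) xi" unfolding chi(2) by (rule dc_prod[OF dc0 dcq])
  moreover have "xi x = e (real_of_int (x - 1) / real_of_int (q^2))" if "[x = 1] (mod q)" for x
    using G1_val[OF xi0 that] dc_cong[OF chi(1) that] dc_one[OF chi(1)] unfolding chi(2) by simp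
  ultimately show "xi \<in> G1 q" unfolding G1_def by blast
qed

lemma G1_inj:
  fixes q :: int
  assumes q: "q \<ge> 2" and xi0: "xi0 \<in> G1 q"
  shows "inj_on (\<lambda>chi n. xi0 n * chi n) {chi. dirichlet_char q chi}"
proof (rule inj_onI)
  fix a b assume a: "a \<in> {chi. dirichlet_char q chi}" and b: "b \<in> {chi. dirichlet_char q chi}"
    and eq: "(\<lambda>n. xi0 n * a n) = (\<lambda>n. xi0 n * b n)"
  show "a = b"
  proof (rule dc_ext[of q])
    show "dirichlet_char q a" "dirichlet_char q b" using a b by auto
    fix n assume "coprime n q"
    hence "xi0 n \<noteq> 0" using dc_zero_iff[OF G1_dc[OF xi0], of n] by simp
    moreover have "xi0 n * a n = xi0 n * b n" using fun_cong[OF eq, of n] by simp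
    ultimately show "a n = b n" by simp
  qed
qed


lemma div_helper3: "(Q::real) \<noteq> 0 \<Longrightarrow> A = Q^2 * u + Q * v \<Longrightarrow> A / Q^2 = v / Q + u"
  by (simp add: field_simps power2_eq_square)

lemma key_phase:
  fixes q n n' :: int
  assumes q: "q \<ge> 2" and xi0: "xi0 \<in> G1 q" and n: "coprime n q" and nn: "[n = n'] (mod q)"
    and nb: "[n * nb = 1] (mod q)"
  shows "cnj (xi0 n) * xi0 n' = e (real_of_int nb / real_of_int q * real_of_int ((n' - n) div q))"
proof -
  have m: "q^2 > 1" using q by (smt (verit) one_less_power pos2)
  have dc0: "dirichlet_char (q^2) xi0" by (rule G1_dc[OF xi0])
  define T where "T = totient (nat (q^2))"
  define ns where "ns = n ^ (T - 1)"
  have n2: "coprime n (q^2)" using n by simp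
  have nns: "[n * ns = 1] (mod q^2)" unfolding ns_def T_def by (rule inverse_mod[OF m n2])
  have c1: "cnj (xi0 n) = xi0 ns" by (rule dc_inv[OF dc0 m n2 nns])
  have nns1: "[n * ns = 1] (mod q)" using cong_dvd_modulus[OF nns, of q] by simp
  have "[ns * n' = ns * n] (mod q)" by (rule cong_scalar_left[OF cong_sym[OF nn]])
  also have "[ns * n = 1] (mod q)" using nns1 by (simp add: mult.commute)
  finally have u1: "[ns * n' = 1] (mod q)" .
  have "cnj (xi0 n) * xi0 n' = xi0 (ns * n')" using c1 dc_mult[OF dc0] by simp
  also have "\<dots> = e (real_of_int (ns * n' - 1) / real_of_int (q^2))" by (rule G1_val[OF xi0 u1])
  also have "\<dots> = e (real_of_int nb / real_of_int q * real_of_int ((n' - n) div q))"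
  proof -
    define d where "d = (n' - n) div q"
    have "q dvd (n' - n)" using nn by (simp add: cong_iff_dvd_diff dvd_diff_commute)
    hence d: "n' = n + q * d" unfolding d_def by auto
    obtain t where t: "n * ns - 1 = q^2 * t" using nns unfolding cong_iff_dvd_diff by blast
    have "[ns = ns * (n * nb)] (mod q)" using cong_scalar_left[OF cong_sym[OF nb], of ns] by simp
    also have "[ns * (n * nb) = (n * ns) * nb] (mod q)" by (simp add: mult_ac)
    also have "[(n * ns) * nb = 1 * nb] (mod q)" by (rule cong_scalar_right[OF nns1])
    finally have "[ns = nb] (mod q)" by simp
    then obtain s where s: "ns - nb = q * s" unfolding cong_iff_dvd_diff by blast
    have "ns * n' - 1 = q^2 * (t + s * d) + q * (nb * d)"
    proof -
      have "ns * n' - 1 = (n * ns - 1) + (ns - nb) * q * d + nb * q * d" using d by (simp add: algebra_simps)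
      also have "\<dots> = q^2 * t + q * s * q * d + nb * q * d" using t s by simp
      finally show ?thesis by (simp add: algebra_simps power2_eq_square)
    qed
    hence "real_of_int (ns * n' - 1) = (real_of_int q)^2 * real_of_int (t + s * d) + real_of_int q * real_of_int (nb * d)"
      by (metis of_int_add of_int_mult of_int_power)
    hence "real_of_int (ns * n' - 1) / (real_of_int q)^2 = real_of_int (nb * d) / real_of_int q + real_of_int (t + s * d)"
      using q by (intro div_helper3) simp_all
    hence "real_of_int (ns * n' - 1) / real_of_int (q^2) = real_of_int nb / real_of_int q * real_of_int d + real_of_int (t + s * d)"
      by simp
    thus ?thesis unfolding d_def by (simp only: e_add_int)
  qed
  finally show ?thesis .
qed

lemma key_sum:
  fixes q n n' :: int
  assumes q: "q \<ge> 2" and xi0: "xi0 \<in> G1 q"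
    and nbar: "\<forall>n. coprime n q \<longrightarrow> [n * nbar n = 1] (mod q)"
  shows "(\<Sum>chi\<in>{chi. dirichlet_char q chi}. cnj (xi0 n * chi n) * (xi0 n' * chi n')) =
         (if coprime (n * n') q \<and> [n = n'] (mod q)
          then of_nat (totient (nat q)) * e (real_of_int (nbar n) / real_of_int q * real_of_int ((n' - n) div q))
          else 0)"
proof -
  have q1: "q > 1" using q by simp
  have dc0: "dirichlet_char (q^2) xi0" by (rule G1_dc[OF xi0])
  show ?thesis
  proof (cases "coprime n q \<and> coprime n' q")
    case False
    hence "xi0 n = 0 \<or> xi0 n' = 0" using dc_zero_iff[OF dc0] by simp
    hence "(\<Sum>chi\<in>{chi. dirichlet_char q chi}. cnj (xi0 n * chi n) * (xi0 n' * chi n')) = 0"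
      by auto
    thus ?thesis using False by auto
  next
    case True
    hence n: "coprime n q" and n': "coprime n' q" by auto
    have nb: "[n * nbar n = 1] (mod q)" using nbar n by blast
    have "coprime (n * nbar n) q" using cong_imp_coprime[OF cong_sym[OF nb]] by simp
    hence nbc: "coprime (nbar n) q" by simp
    have eq: "[nbar n * n' = 1] (mod q) \<longleftrightarrow> [n = n'] (mod q)"
    proof
      assume h: "[nbar n * n' = 1] (mod q)"
      have "[n = n * (nbar n * n')] (mod q)" using cong_scalar_left[OF cong_sym[OF h], of n] by simp
      also have "[n * (nbar n * n') = (n * nbar n) * n'] (mod q)" by (simp add: mult_ac)
      also have "[(n * nbar n) * n' = 1 * n'] (mod q)" by (rule cong_scalar_right[OF nb])
      finally show "[n = n'] (mod q)" by simp
    next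
      assume h: "[n = n'] (mod q)"
      have "[nbar n * n' = nbar n * n] (mod q)" by (rule cong_scalar_left[OF cong_sym[OF h]])
      also have "[nbar n * n = 1] (mod q)" using nb by (simp add: mult.commute)
      finally show "[nbar n * n' = 1] (mod q)" .
    qed
    have "(\<Sum>chi\<in>{chi. dirichlet_char q chi}. cnj (xi0 n * chi n) * (xi0 n' * chi n')) =
          (\<Sum>chi\<in>{chi. dirichlet_char q chi}. (cnj (xi0 n) * xi0 n') * chi (nbar n * n'))"
    proof (rule sum.cong)
      fix chi assume "chi \<in> {chi. dirichlet_char q chi}"
      hence chi: "dirichlet_char q chi" by simp
      have "cnj (chi n) = chi (nbar n)" by (rule dc_inv[OF chi q1 n nb])
      thus "cnj (xi0 n * chi n) * (xi0 n' * chi n') = (cnj (xi0 n) * xi0 n') * chi (nbar n * n')"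
        using dc_mult[OF chi] by (simp add: mult_ac)
    qed simp
    also have "\<dots> = (cnj (xi0 n) * xi0 n') * (\<Sum>chi\<in>{chi. dirichlet_char q chi}. chi (nbar n * n'))"
      by (simp add: sum_distrib_left)
    also have "\<dots> = (cnj (xi0 n) * xi0 n') * (if [n = n'] (mod q) then of_nat (totient (nat q)) else 0)"
      using sum_chars[OF q1, of "nbar n * n'"] nbc n' eq card_dc[OF q1] by simp
    also have "\<dots> = (if coprime (n * n') q \<and> [n = n'] (mod q)
          then of_nat (totient (nat q)) * e (real_of_int (nbar n) / real_of_int q * real_of_int ((n' - n) div q))
          else 0)"
      using key_phase[OF q xi0 n _ nb] n n' by (auto simp: mult.commute)
    finally show ?thesis .
  qed
qed


lemma norm_sq_expand:
  fixes I :: "int set" and a xi :: "int \<Rightarrow> complex"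
  shows "complex_of_real ((cmod (\<Sum>n\<in>I. a n * xi n))\<^sup>2) =
         (\<Sum>n\<in>I. \<Sum>n'\<in>I. cnj (a n) * a n' * (cnj (xi n) * xi n'))"
proof -
  have "complex_of_real ((cmod (\<Sum>n\<in>I. a n * xi n))\<^sup>2) = (\<Sum>n\<in>I. a n * xi n) * cnj (\<Sum>n\<in>I. a n * xi n)"
    by (rule complex_norm_square)
  also have "\<dots> = cnj (\<Sum>n\<in>I. a n * xi n) * (\<Sum>n\<in>I. a n * xi n)" by (rule mult.commute)
  also have "\<dots> = (\<Sum>n\<in>I. cnj (a n) * cnj (xi n)) * (\<Sum>n'\<in>I. a n' * xi n')" by simp
  also have "\<dots> = (\<Sum>n\<in>I. \<Sum>n'\<in>I. (cnj (a n) * cnj (xi n)) * (a n' * xi n'))" by (rule sum_product)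
  also have "\<dots> = (\<Sum>n\<in>I. \<Sum>n'\<in>I. cnj (a n) * a n' * (cnj (xi n) * xi n'))"
    by (simp add: mult_ac)
  finally show ?thesis .
qed

theorem mainTheorem1:
  fixes q M :: int and N :: nat and a :: "int \<Rightarrow> complex" and nbar :: "int \<Rightarrow> int"
  assumes q2: "q \<ge> 2"
    and nbar: "\<forall>n. coprime n q \<longrightarrow> [n * nbar n = 1] (mod q)"
  shows "complex_of_real (real_of_int q / real (totient (nat q)) *
           (\<Sum>\<xi>\<in>G1 q. (cmod (\<Sum>n\<in>{M+1..M + int N}. a n * \<xi> n))\<^sup>2))
         = of_int q * (\<Sum>n\<in>{M+1..M + int N}. \<Sum>n'\<in>{M+1..M + int N}.
              if coprime (n * n') q \<and> [n = n'] (mod q)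
              then cnj (a n) * a n' *
                   e (real_of_int (nbar n) / real_of_int q * (real_of_int ((n' - n) div q)))
              else 0)
         \<and> finite (G1 q)
         \<and> card (G1 q) = totient (nat q)
         \<and> (\<forall>\<xi>0\<in>G1 q. G1 q = {(\<lambda>n. \<xi>0 n * chi n) | chi. dirichlet_char q chi})"
proof -
  have q1: "q > 1" using q2 by simp
  obtain xi0 where xi0: "xi0 \<in> G1 q" using G1_exists[OF q2] by blast
  define X where "X = {chi. dirichlet_char q chi}"
  define f where "f = (\<lambda>chi n. xi0 n * chi n)"
  define I where "I = {M+1..M + int N}"
  define P where "P = totient (nat q)"
  have P0: "P > 0" unfolding P_def using q1 by simp
  have G: "G1 q = f ` X" unfolding f_def X_def by (rule G1_eq[OF q2 xi0])
  have inj: "inj_on f X" unfolding f_def X_def by (rule G1_inj[OF q2 xi0])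
  have fX: "finite X" unfolding X_def by (rule finite_dc[OF q1])
  have cX: "card X = P" unfolding X_def P_def by (rule card_dc[OF q1])
  have part2: "finite (G1 q)" using G fX by simp
  have part3: "card (G1 q) = totient (nat q)" using G inj cX card_image unfolding P_def by metis
  have part4: "\<forall>\<xi>0\<in>G1 q. G1 q = {(\<lambda>n. \<xi>0 n * chi n) | chi. dirichlet_char q chi}"
  proof
    fix x0 assume "x0 \<in> G1 q"
    from G1_eq[OF q2 this] show "G1 q = {(\<lambda>n. x0 n * chi n) | chi. dirichlet_char q chi}" by blast
  qed
  define c where "c = (\<lambda>n n'. cnj (a n) * a n')"
  define E where "E = (\<lambda>n n'. e (real_of_int (nbar n) / real_of_int q * (real_of_int ((n' - n) div q))))"
  define C where "C = (\<lambda>n n'. coprime (n * n') q \<and> [n = n'] (mod q))"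
  have "complex_of_real (\<Sum>\<xi>\<in>G1 q. (cmod (\<Sum>n\<in>I. a n * \<xi> n))\<^sup>2) =
        (\<Sum>\<xi>\<in>G1 q. complex_of_real ((cmod (\<Sum>n\<in>I. a n * \<xi> n))\<^sup>2))" by simp
  also have "\<dots> = (\<Sum>chi\<in>X. complex_of_real ((cmod (\<Sum>n\<in>I. a n * f chi n))\<^sup>2))"
    unfolding G by (rule sum.reindex[OF inj, unfolded comp_def])
  also have "\<dots> = (\<Sum>chi\<in>X. \<Sum>n\<in>I. \<Sum>n'\<in>I. c n n' * (cnj (xi0 n * chi n) * (xi0 n' * chi n')))"
    unfolding c_def f_def by (rule sum.cong[OF refl], rule norm_sq_expand)
  also have "\<dots> = (\<Sum>n\<in>I. \<Sum>chi\<in>X. \<Sum>n'\<in>I. c n n' * (cnj (xi0 n * chi n) * (xi0 n' * chi n')))"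
    by (rule sum.swap)
  also have "\<dots> = (\<Sum>n\<in>I. \<Sum>n'\<in>I. \<Sum>chi\<in>X. c n n' * (cnj (xi0 n * chi n) * (xi0 n' * chi n')))"
    by (rule sum.cong[OF refl], rule sum.swap)
  also have "\<dots> = (\<Sum>n\<in>I. \<Sum>n'\<in>I. c n n' * (if C n n' then of_nat P * E n n' else 0))"
    unfolding C_def E_def P_def X_def
    by (simp only: sum_distrib_left[symmetric] key_sum[OF q2 xi0 nbar])
  finally have S: "complex_of_real (\<Sum>\<xi>\<in>G1 q. (cmod (\<Sum>n\<in>I. a n * \<xi> n))\<^sup>2) =
      (\<Sum>n\<in>I. \<Sum>n'\<in>I. c n n' * (if C n n' then of_nat P * E n n' else 0))" .
  have "complex_of_real (real_of_int q / real P * (\<Sum>\<xi>\<in>G1 q. (cmod (\<Sum>n\<in>I. a n * \<xi> n))\<^sup>2))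
        = (of_int q / of_nat P) * complex_of_real (\<Sum>\<xi>\<in>G1 q. (cmod (\<Sum>n\<in>I. a n * \<xi> n))\<^sup>2)"
    by simp
  also have "\<dots> = (of_int q / of_nat P) * (\<Sum>n\<in>I. \<Sum>n'\<in>I. c n n' * (if C n n' then of_nat P * E n n' else 0))"
    unfolding S ..
  also have "\<dots> = of_int q * (\<Sum>n\<in>I. \<Sum>n'\<in>I. if C n n' then c n n' * E n n' else 0)"
    unfolding sum_distrib_left
    by (rule sum.cong[OF refl], rule sum.cong[OF refl]) (use P0 in auto)
  finally have part1: "complex_of_real (real_of_int q / real P * (\<Sum>\<xi>\<in>G1 q. (cmod (\<Sum>n\<in>I. a n * \<xi> n))\<^sup>2))
        = of_int q * (\<Sum>n\<in>I. \<Sum>n'\<in>I. if C n n' then c n n' * E n n' else 0)" .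
  show ?thesis using part1 part2 part3 part4 unfolding I_def P_def C_def c_def E_def by blast
qed

end
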